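(* Let $\mathcal G$ be a rooted digraph, $T>0$, $r\in(0,1)^N$, $\xi\in\Xi$, and $\mathcal A:=\mathcal A_s\times\mathbb Z_{\ge0}$. If $\xi$ contains the synchronization string $\zeta$ (with respect to some root $i^*$) infinitely often, then $\mathcal H_\xi$ renders $\mathcal A$ uniformly globally stable (UGS) and globally finite-time attractive (GFTA). If $\xi$ contains $\zeta$ uniformly infinitely often, then $\mathcal H_\xi$ renders $\mathcal A$ UGS and globally fixed-time attractive (GFxTA).
   Context: $\mathcal G=(\mathcal V,\mathcal E)$ is a simple digraph on $\mathcal V=\{1,\dots,N\}$; $(i,j)\in\mathcal E$ means $j$ is an out-neighbor of $i$; $\mathcal E_i^-$ is the set of out-edges of $i$. A path is a sequence of pairwise distinct vertices with consecutive pairs in $\mathcal E$, its length the number of edges. A root is a vertex from which every other vertex is reachable; rooted means a root exists. For a root $i^*$, $\mathcal V_q(i^* )$ is the set of vertices at shortest-path distance $q$ from $i^*$ and $q^*$ the maximal distance. $\underline r=\min_ir_i$, $\ell^*:=N(\lfloor1/\underline r\rfloor+1)$. A subgraph $(\mathcal V,\mathcal E')$, $\mathcal E'\subseteq\mathcal E$, is feasible if for every $i$ either $\mathcal E_i^-\subseteq\mathcal E'$ or $\mathcal E_i^-\cap\mathcal E'=\varnothing$. $\Xi$ is the set of infinite sequences $\xi=\phi_1\phi_2\cdots$ of feasible subgraphs, $\phi_\lambda=(\mathcal V,\mathcal E_\lambda)$. With $\mathcal G_q=(\mathcal V,\bigcup_{i\in\mathcal V_q(i^* )}\mathcal E_i^-)$,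 the synchronization string w.r.t. $i^*$ is $\zeta=\mathcal G_0\cdots\mathcal G_0\cdots\mathcal G_{q^*-1}\cdots\mathcal G_{q^*-1}$, each $\mathcal G_q$ repeated consecutively $\ell^*$ times. $\xi$ contains $\zeta$ infinitely often if it has infinitely many pairwise disjoint blocks of consecutive terms equal to $\zeta$; uniformly infinitely often if there is $n\in\mathbb Z_{>0}$ such that every block of $n$ consecutive terms of $\xi$ contains $\zeta$ as a block. Hybrid system $\mathcal H_\xi$: state $x=(\tau,\lambda)\in\mathbb R^N_{\ge0}\times\mathbb Z_{\ge0}$; flow set $C=[0,1]^N\times\mathbb Z_{\ge0}$ with $\dot\tau=\frac1T\mathbf 1_N$, $\dot\lambda=0$; jump set $D=\{\tau\in[0,1]^N:\max_i\tau_i=1\}\times\mathbb Z_{\ge0}$ with $x^+\in G_{\lambda+1}(\tau)\times\{\lambda+1\}$, where $G_\lambda$ is the outer-semicontinuous hull of $G_\lambda^0(\tau)=\{g:g_i=0,\ g_j\in\mathcal R_{j,\lambda}(\tau)\ \forall j\ne i\}$, $i$ an agent with $\tau_i=1$, and $\mathcal R_{j,\lambda}(\tau)=\{0\}$, $\{0,1\}$, $\{1\}$ if $(i,j)\in\mathcal E_\lambda$ and $\tau_j<r_j$, $=r_j$, $>r_j$ respectively, and $\{\tau_j\}$ if $(i,j)\notin\mathcal E_\lambda$. Solutions are hybrid arcs on hybrid time domains (unions of $[t_k,t_{k+1}]\times\{k\}$) that flow in $C$ according to the flow map and jump from $D$ via the jump map. $\mathcal A_s:=\{\mu\mathbf 1_N:\mu\in[0,1]\}\cup\{0,1\}^N$;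 $|x|_{\mathcal A}$ is the Euclidean distance from $x$ (viewed in $\mathbb R^{N+1}$) to $\mathcal A$. $\mathcal H_\xi$ renders $\mathcal A$: UGS if there is a class-$\mathcal K_\infty$ function $\alpha$ with $|x(t,k)|_{\mathcal A}\le\alpha(|x(0,0)|_{\mathcal A})$ for every solution and all $(t,k)\in\operatorname{dom}x$; GFTA if for each solution $x$ there is $\bar T(x(0,0))>0$ with $|x(t,k)|_{\mathcal A}=0$ for all $(t,k)\in\operatorname{dom}x$ with $t+k\ge\bar T(x(0,0))$; GFxTA if it is GFTA with $\bar T$ a constant independent of $x(0,0)$. *)

theory Defs
  imports "HOL-Analysis.Analysis"
begin

text \<open>Vertices are the elements of a finite type 'n (so N = CARD('n));
  a digraph is an edge relation E; simple means no self-loops.\<close>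

definition simple_digraph :: "('n \<times> 'n) set \<Rightarrow> bool" where
  "simple_digraph E \<longleftrightarrow> (\<forall>i. (i, i) \<notin> E)"

definition out_edges :: "('n \<times> 'n) set \<Rightarrow> 'n \<Rightarrow> ('n \<times> 'n) set" where
  "out_edges E i = {e \<in> E. fst e = i}"

definition is_path :: "('n \<times> 'n) set \<Rightarrow> 'n list \<Rightarrow> bool" where
  "is_path E p \<longleftrightarrow> p \<noteq> [] \<and> distinct p \<and>
     (\<forall>k. Suc k < length p \<longrightarrow> (p ! k, p ! Suc k) \<in> E)"

definition is_root :: "('n \<times> 'n) set \<Rightarrow> 'n \<Rightarrow> bool" where
  "is_root E i \<longleftrightarrow> (\<forall>j. \<exists>p. is_path E p \<and> hd p = i \<and> last p = j)"

definition rooted :: "('n \<times> 'n) set \<Rightarrow> bool" where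
  "rooted E \<longleftrightarrow> (\<exists>i. is_root E i)"

text \<open>Shortest-path distance (path length = number of edges = length of vertex list - 1).\<close>
definition sp_dist :: "('n \<times> 'n) set \<Rightarrow> 'n \<Rightarrow> 'n \<Rightarrow> nat" where
  "sp_dist E i j = (LEAST q. \<exists>p. is_path E p \<and> hd p = i \<and> last p = j \<and> length p = Suc q)"

definition level_set :: "('n \<times> 'n) set \<Rightarrow> 'n \<Rightarrow> nat \<Rightarrow> 'n set" where
  "level_set E i q = {j. sp_dist E i j = q}"

definition max_dist :: "('n::finite \<times> 'n) set \<Rightarrow> 'n \<Rightarrow> nat" where
  "max_dist E i = Max (range (sp_dist E i))"

definition feasible :: "('n \<times> 'n) set \<Rightarrow> ('n \<times> 'n) set \<Rightarrow> bool" where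
  "feasible E E' \<longleftrightarrow> E' \<subseteq> E \<and>
     (\<forall>i. out_edges E i \<subseteq> E' \<or> out_edges E i \<inter> E' = {})"

text \<open>A sequence xi = phi_1 phi_2 ... is a map nat => edge set; only indices >= 1 are used.\<close>
definition in_Xi :: "('n \<times> 'n) set \<Rightarrow> (nat \<Rightarrow> ('n \<times> 'n) set) \<Rightarrow> bool" where
  "in_Xi E \<xi> \<longleftrightarrow> (\<forall>l\<ge>1. feasible E (\<xi> l))"

definition r_min :: "real^'n \<Rightarrow> real" where
  "r_min r = Min (range (\<lambda>i. r $ i))"

definition ell_star :: "real^'n \<Rightarrow> nat" where
  "ell_star r = CARD('n) * (nat \<lfloor>1 / r_min r\<rfloor> + 1)"

definition level_graph :: "('n \<times> 'n) set \<Rightarrow> 'n \<Rightarrow> nat \<Rightarrow> ('n \<times> 'n) set" where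
  "level_graph E i q = (\<Union>j\<in>level_set E i q. out_edges E j)"

definition sync_string :: "('n::finite \<times> 'n) set \<Rightarrow> real^'n \<Rightarrow> 'n \<Rightarrow> ('n \<times> 'n) set list" where
  "sync_string E r i =
     concat (map (\<lambda>q. replicate (ell_star r) (level_graph E i q)) [0..<max_dist E i])"

definition occurs_at :: "(nat \<Rightarrow> 'a) \<Rightarrow> 'a list \<Rightarrow> nat \<Rightarrow> bool" where
  "occurs_at \<xi> z s \<longleftrightarrow> s \<ge> 1 \<and> (\<forall>k < length z. \<xi> (s + k) = z ! k)"

definition contains_inf_often :: "(nat \<Rightarrow> 'a) \<Rightarrow> 'a list \<Rightarrow> bool" where
  "contains_inf_often \<xi> z \<longleftrightarrow> (\<exists>S. infinite S \<and> (\<forall>s\<in>S. occurs_at \<xi> z s) \<and>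
     (\<forall>s\<in>S. \<forall>s'\<in>S. s \<noteq> s' \<longrightarrow> {s..<s + length z} \<inter> {s'..<s' + length z} = {}))"

definition contains_unif_inf_often :: "(nat \<Rightarrow> 'a) \<Rightarrow> 'a list \<Rightarrow> bool" where
  "contains_unif_inf_often \<xi> z \<longleftrightarrow> (\<exists>n::nat. n > 0 \<and>
     (\<forall>s\<ge>1. \<exists>s'. s \<le> s' \<and> s' + length z \<le> s + n \<and> occurs_at \<xi> z s'))"

definition C_set :: "((real^'n) \<times> nat) set" where
  "C_set = {(\<tau>, l). \<forall>i. 0 \<le> \<tau> $ i \<and> \<tau> $ i \<le> 1}"

definition D_tau :: "(real^'n::finite) set" where
  "D_tau = {\<tau>. (\<forall>i. 0 \<le> \<tau> $ i \<and> \<tau> $ i \<le> 1) \<and> Max (range (\<lambda>i. \<tau> $ i)) = 1}"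

definition D_set :: "((real^'n::finite) \<times> nat) set" where
  "D_set = D_tau \<times> UNIV"

definition R_set :: "('n \<times> 'n) set \<Rightarrow> real^'n \<Rightarrow> 'n \<Rightarrow> real^'n \<Rightarrow> 'n \<Rightarrow> real set" where
  "R_set El r i \<tau> j =
     (if (i, j) \<in> El then
        (if \<tau> $ j < r $ j then {0} else if \<tau> $ j = r $ j then {0, 1} else {1})
      else {\<tau> $ j})"

definition G0 :: "('n \<times> 'n) set \<Rightarrow> real^'n \<Rightarrow> real^'n \<Rightarrow> (real^'n) set" where
  "G0 El r \<tau> = {g. \<exists>i. \<tau> $ i = 1 \<and> g $ i = 0 \<and> (\<forall>j. j \<noteq> i \<longrightarrow> g $ j \<in> R_set El r i \<tau> j)}"

text \<open>Outer-semicontinuous hull: the set-valued map whose graph is the closure of the graph of G0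
  (G0 considered on the jump set D).\<close>
definition G_hull :: "('n::finite \<times> 'n) set \<Rightarrow> real^'n \<Rightarrow> real^'n \<Rightarrow> (real^'n) set" where
  "G_hull El r \<tau> = {g. (\<tau>, g) \<in> closure {(\<sigma>, h). \<sigma> \<in> D_tau \<and> h \<in> G0 El r \<sigma>}}"

definition compact_htd :: "(real \<times> nat) set \<Rightarrow> bool" where
  "compact_htd S \<longleftrightarrow> (\<exists>J (t::nat \<Rightarrow> real). t 0 = 0 \<and> (\<forall>j\<le>J. t j \<le> t (Suc j)) \<and>
       S = (\<Union>j\<in>{0..J}. {t j..t (Suc j)} \<times> {j}))"

definition hybrid_time_domain :: "(real \<times> nat) set \<Rightarrow> bool" where
  "hybrid_time_domain S \<longleftrightarrow> S \<subseteq> {0..} \<times> UNIV \<and>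
     (\<forall>T J. (T, J) \<in> S \<longrightarrow> compact_htd (S \<inter> ({0..T} \<times> {0..J})))"

text \<open>Since the flow map is the constant vector (1/T) 1_N for tau and 0 for lambda, the
  (locally absolutely continuous) flow condition is written as: on each interval
  I^j = {t. (t,j) in hdom} tau is continuous with derivative (1/T) 1_N at every interior point,
  lambda is constant, and the state lies in C on the interior of I^j.\<close>
definition is_solution ::
  "real \<Rightarrow> (nat \<Rightarrow> ('n::finite \<times> 'n) set) \<Rightarrow> real^'n \<Rightarrow>
   (real \<times> nat) set \<Rightarrow> (real \<times> nat \<Rightarrow> (real^'n) \<times> nat) \<Rightarrow> bool" where
  "is_solution Tp \<xi> r hdom x \<longleftrightarrow>
     hdom \<noteq> {} \<and> hybrid_time_domain hdom \<and>
     x (0, 0) \<in> closure C_set \<union> D_set \<and>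
     (\<forall>j. let I = {t. (t, j) \<in> hdom} in
        continuous_on I (\<lambda>t. fst (x (t, j))) \<and>
        (\<forall>t\<in>I. \<forall>t'\<in>I. snd (x (t, j)) = snd (x (t', j))) \<and>
        (\<forall>t\<in>interior I. x (t, j) \<in> C_set \<and>
           ((\<lambda>s. fst (x (s, j))) has_vector_derivative ((\<chi> i. 1 / Tp) :: real^'n)) (at t))) \<and>
     (\<forall>t j. (t, j) \<in> hdom \<and> (t, Suc j) \<in> hdom \<longrightarrow>
        x (t, j) \<in> D_set \<and>
        fst (x (t, Suc j)) \<in> G_hull (\<xi> (Suc (snd (x (t, j))))) r (fst (x (t, j))) \<and>
        snd (x (t, Suc j)) = Suc (snd (x (t, j))))"

definition A_s :: "(real^'n) set" where
  "A_s = {(\<chi> i. \<mu>) | \<mu>. 0 \<le> \<mu> \<and> \<mu> \<le> 1} \<union> {v. \<forall>i. v $ i \<in> {0, 1}}"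

text \<open>A = A_s x Z_{>=0}, viewed as a subset of R^{N+1} = R^N x R.\<close>
definition A_set :: "((real^'n) \<times> real) set" where
  "A_set = {(v, real k) | v k. v \<in> A_s}"

definition dist_A :: "(real^'n) \<times> nat \<Rightarrow> real" where
  "dist_A z = infdist (fst z, real (snd z)) A_set"

definition class_K_inf :: "(real \<Rightarrow> real) \<Rightarrow> bool" where
  "class_K_inf \<alpha> \<longleftrightarrow> continuous_on {0..} \<alpha> \<and> \<alpha> 0 = 0 \<and> strict_mono_on {0..} \<alpha> \<and>
     filterlim \<alpha> at_top at_top"

definition UGS :: "real \<Rightarrow> (nat \<Rightarrow> ('n::finite \<times> 'n) set) \<Rightarrow> real^'n \<Rightarrow> bool" where
  "UGS Tp \<xi> r \<longleftrightarrow> (\<exists>\<alpha>. class_K_inf \<alpha> \<and>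
     (\<forall>hdom x. is_solution Tp \<xi> r hdom x \<longrightarrow>
        (\<forall>(t, k)\<in>hdom. dist_A (x (t, k)) \<le> \<alpha> (dist_A (x (0, 0))))))"

definition GFTA :: "real \<Rightarrow> (nat \<Rightarrow> ('n::finite \<times> 'n) set) \<Rightarrow> real^'n \<Rightarrow> bool" where
  "GFTA Tp \<xi> r \<longleftrightarrow> (\<exists>Tbar :: (real^'n) \<times> nat \<Rightarrow> real.
     \<forall>hdom x. is_solution Tp \<xi> r hdom x \<longrightarrow> Tbar (x (0, 0)) > 0 \<and>
        (\<forall>(t, k)\<in>hdom. t + real k \<ge> Tbar (x (0, 0)) \<longrightarrow> dist_A (x (t, k)) = 0))"

definition GFxTA :: "real \<Rightarrow> (nat \<Rightarrow> ('n::finite \<times> 'n) set) \<Rightarrow> real^'n \<Rightarrow> bool" where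
  "GFxTA Tp \<xi> r \<longleftrightarrow> (\<exists>Tbar :: real. Tbar > 0 \<and>
     (\<forall>hdom x. is_solution Tp \<xi> r hdom x \<longrightarrow>
        (\<forall>(t, k)\<in>hdom. t + real k \<ge> Tbar \<longrightarrow> dist_A (x (t, k)) = 0)))"

end

theory Submission
  imports Defs
begin


definition pd :: "real \<Rightarrow> real \<Rightarrow> real" where
  "pd a b = min \<bar>a - b\<bar> (1 - \<bar>a - b\<bar>)"

definition inbox :: "real^'n \<Rightarrow> bool" where
  "inbox \<tau> \<longleftrightarrow> (\<forall>i. 0 \<le> \<tau>$i \<and> \<tau>$i \<le> 1)"

definition syncB :: "'n set \<Rightarrow> real \<Rightarrow> real^'n \<Rightarrow> bool" where
  "syncB Y c \<tau> \<longleftrightarrow> (\<forall>a\<in>Y. \<forall>b\<in>Y. pd (\<tau>$a) (\<tau>$b) \<le> c)"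

definition G0' :: "('n \<times> 'n) set \<Rightarrow> real^'n \<Rightarrow> 'n \<Rightarrow> real^'n \<Rightarrow> real^'n \<Rightarrow> bool" where
  "G0' El r i \<tau> g \<longleftrightarrow> \<tau>$i = 1 \<and> g$i = 0 \<and> (\<forall>j. j \<noteq> i \<longrightarrow> g $ j \<in> R_set El r i \<tau> j)"

lemma G0_iff: "g \<in> G0 El r \<tau> \<longleftrightarrow> (\<exists>i. G0' El r i \<tau> g)"
  by (simp add: G0_def G0'_def)

lemma R_set_cases:
  assumes "g \<in> R_set El r i \<tau> j"
  shows "(g = \<tau>$j) \<or> ((i,j) \<in> El \<and> (g = 0 \<or> g = 1) \<and> (\<tau>$j < r$j \<longrightarrow> g = 0) \<and> (\<tau>$j > r$j \<longrightarrow> g = 1))"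
  using assms by (auto simp: R_set_def split: if_splits)

lemma pd_same[simp]: "pd a a = 0" by (simp add: pd_def)
lemma pd_comm: "pd a b = pd b a" by (simp add: pd_def abs_minus_commute)
lemma pd_shift: "pd (a + d) (b + d) = pd a b" by (simp add: pd_def)
lemma pd_01: "0 \<le> b \<Longrightarrow> b \<le> 1 \<Longrightarrow> pd 0 b = pd 1 b" by (simp add: pd_def)
lemma pd_zero_iff: "0 \<le> a \<Longrightarrow> a \<le> 1 \<Longrightarrow> 0 \<le> b \<Longrightarrow> b \<le> 1 \<Longrightarrow>
   pd a b \<le> 0 \<longleftrightarrow> (a = b \<or> \<bar>a - b\<bar> = 1)"
  by (auto simp: pd_def min_def split: if_splits)

lemma G0'_inbox:
  assumes "inbox \<tau>" "G0' El r i \<tau> g" shows "inbox g"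
  unfolding inbox_def
proof
  fix j show "0 \<le> g$j \<and> g$j \<le> 1"
  proof (cases "j = i")
    case True then show ?thesis using assms by (simp add: G0'_def)
  next
    case False
    then have "g$j \<in> R_set El r i \<tau> j" using assms by (simp add: G0'_def)
    from R_set_cases[OF this] show ?thesis using assms(1) by (auto simp: inbox_def)
  qed
qed

lemma sync_jump:
  assumes box: "inbox \<tau>" and G: "G0' El r i \<tau> g" and S: "syncB Y c \<tau>"
    and act: "i \<notin> Y \<Longrightarrow> (\<forall>j\<in>Y. (i,j) \<notin> El)"
  shows "syncB Y c g"
proof -
  have key: "g$j = \<tau>$j \<or> ((g$j = 0 \<or> g$j = 1) \<and> i \<in> Y)" if "j \<in> Y" for j
  proof (cases "j = i")
    case True then show ?thesis using G that by (simp add: G0'_def)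
  next
    case False
    then have "g$j \<in> R_set El r i \<tau> j" using G by (simp add: G0'_def)
    from R_set_cases[OF this] act that show ?thesis by auto
  qed
  have ti: "\<tau>$i = 1" using G by (simp add: G0'_def)
  show ?thesis unfolding syncB_def
  proof (intro ballI)
    fix a b assume a: "a \<in> Y" and b: "b \<in> Y"
    have c0: "0 \<le> c" using S a unfolding syncB_def by (metis pd_same)
    have ba: "0 \<le> \<tau>$a" "\<tau>$a \<le> 1" "0 \<le> \<tau>$b" "\<tau>$b \<le> 1" using box by (auto simp: inbox_def)
    show "pd (g$a) (g$b) \<le> c"
    proof (cases "g$a = \<tau>$a")
      case ga: True
      show ?thesis
      proof (cases "g$b = \<tau>$b")
        case True then show ?thesis using ga S a b by (simp add: syncB_def)
      next
        case False
        then have "g$b = 0 \<or> g$b = 1" "i \<in> Y" using key[OF b] by auto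
        then have "pd (g$a) (g$b) = pd (\<tau>$a) (\<tau>$i)" using ga ti ba
          by (metis pd_01 pd_comm)
        then show ?thesis using S a \<open>i \<in> Y\<close> by (simp add: syncB_def)
      qed
    next
      case gaF: False
      then have ga: "g$a = 0 \<or> g$a = 1" "i \<in> Y" using key[OF a] by auto
      show ?thesis
      proof (cases "g$b = \<tau>$b")
        case True
        then have "pd (g$a) (g$b) = pd (\<tau>$i) (\<tau>$b)" using ga ti ba
          by (metis pd_01)
        then show ?thesis using S b \<open>i \<in> Y\<close> by (simp add: syncB_def)
      next
        case False
        then have "g$b = 0 \<or> g$b = 1" using key[OF b] by auto
        then show ?thesis using ga c0 by (auto simp: pd_def)
      qed
    qed
  qed
qed

lemma sync_flow: "syncB Y c \<tau> \<Longrightarrow> syncB Y c (\<tau> + (\<chi> i. d))"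
  by (simp add: syncB_def pd_shift)



lemma R_set_iff:
  "g \<in> R_set El r i \<tau> j \<longleftrightarrow>
    (if (i,j) \<in> El then (\<tau>$j \<le> r$j \<and> g = 0) \<or> (r$j \<le> \<tau>$j \<and> g = 1) else g = \<tau>$j)"
  by (auto simp: R_set_def)

lemma D_tau_iff: "\<tau> \<in> D_tau \<longleftrightarrow> inbox \<tau> \<and> (\<exists>i. \<tau>$i = 1)"
proof
  assume "\<tau> \<in> D_tau"
  then have b: "inbox \<tau>" and m: "Max (range (\<lambda>i. \<tau> $ i)) = 1" by (auto simp: D_tau_def inbox_def)
  have "Max (range (\<lambda>i. \<tau> $ i)) \<in> range (\<lambda>i. \<tau> $ i)" by (rule Max_in) auto
  with m b show "inbox \<tau> \<and> (\<exists>i. \<tau>$i = 1)" by auto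
next
  assume a: "inbox \<tau> \<and> (\<exists>i. \<tau>$i = 1)"
  then obtain i where "\<tau>$i = 1" by auto
  then have "Max (range (\<lambda>i. \<tau> $ i)) = 1" using a
    by (intro Max_eqI) (auto simp: inbox_def)
  then show "\<tau> \<in> D_tau" using a by (auto simp: D_tau_def inbox_def)
qed

lemma cont_comp: "continuous_on UNIV (\<lambda>p::(real^'n) \<times> (real^'n). fst p $ k)"
  "continuous_on UNIV (\<lambda>p::(real^'n) \<times> (real^'n). snd p $ k)"
  by (intro continuous_intros)+

definition cnd :: "('n \<times> 'n) set \<Rightarrow> real^'n \<Rightarrow> 'n \<Rightarrow> 'n \<Rightarrow> (real^'n) \<times> (real^'n) \<Rightarrow> bool" where
  "cnd El r i j p \<longleftrightarrow> (if (i,j) \<in> El then (fst p$j \<le> r$j \<and> snd p$j = 0) \<or> (r$j \<le> fst p$j \<and> snd p$j = 1)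
        else snd p$j = fst p$j)"

lemma cnd_closed: fixes r :: "real^'n::finite" shows "closed {p. cnd El r i j p}"
proof (cases "(i,j) \<in> El")
  case True
  then have "{p. cnd El r i j p} = {p. (fst p$j \<le> r$j \<and> snd p$j = 0) \<or> (r$j \<le> fst p$j \<and> snd p$j = 1)}"
    by (simp add: cnd_def)
  moreover have "closed {p :: (real^'n) \<times> (real^'n). (fst p$j \<le> r$j \<and> snd p$j = 0) \<or> (r$j \<le> fst p$j \<and> snd p$j = 1)}"
    apply (rule closed_Collect_disj)
     apply (rule closed_Collect_conj)
      apply (rule closed_Collect_le[OF cont_comp(1) continuous_on_const])
     apply (rule closed_Collect_eq[OF cont_comp(2) continuous_on_const])
    apply (rule closed_Collect_conj)
     apply (rule closed_Collect_le[OF continuous_on_const cont_comp(1)])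
    apply (rule closed_Collect_eq[OF cont_comp(2) continuous_on_const])
    done
  ultimately show ?thesis by simp
next
  case False
  then have "{p. cnd El r i j p} = {p. snd p$j = fst p$j}"
    by (simp add: cnd_def)
  moreover have "closed {p :: (real^'n) \<times> (real^'n). snd p$j = fst p$j}"
    by (rule closed_Collect_eq[OF cont_comp(2) cont_comp(1)])
  ultimately show ?thesis by simp
qed

lemma graph_closed:
  "closed {p :: (real^'n::finite) \<times> (real^'n). fst p \<in> D_tau \<and> snd p \<in> G0 El r (fst p)}"
proof -
  define A1 where "A1 = {p :: (real^'n) \<times> (real^'n). (\<forall>k. 0 \<le> fst p$k \<and> fst p$k \<le> 1)}"
  define A2 where "A2 i = {p :: (real^'n) \<times> (real^'n). fst p$i = 1 \<and> snd p$i = 0}" for i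
  define A3 where "A3 i = (\<Inter>j\<in>-{i}. {p :: (real^'n) \<times> (real^'n). cnd El r i j p})" for i
  have c1: "closed A1" unfolding A1_def
    apply (rule closed_Collect_all)
    apply (rule closed_Collect_conj)
     apply (rule closed_Collect_le[OF continuous_on_const cont_comp(1)])
    apply (rule closed_Collect_le[OF cont_comp(1) continuous_on_const])
    done
  have c2: "closed (A2 i)" for i unfolding A2_def
    apply (rule closed_Collect_conj)
     apply (rule closed_Collect_eq[OF cont_comp(1) continuous_on_const])
    apply (rule closed_Collect_eq[OF cont_comp(2) continuous_on_const])
    done
  have c3: "closed (A3 i)" for i unfolding A3_def
    by (intro closed_INT ballI cnd_closed)
  have eq: "{p :: (real^'n) \<times> (real^'n). fst p \<in> D_tau \<and> snd p \<in> G0 El r (fst p)} = (\<Union>i. A1 \<inter> A2 i \<inter> A3 i)"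
  proof (rule set_eqI)
    fix p :: "(real^'n) \<times> (real^'n)"
    have "fst p \<in> D_tau \<and> snd p \<in> G0 El r (fst p) \<longleftrightarrow> (\<exists>i. p \<in> A1 \<and> p \<in> A2 i \<and> p \<in> A3 i)"
    proof
      assume a: "fst p \<in> D_tau \<and> snd p \<in> G0 El r (fst p)"
      then obtain i where i: "G0' El r i (fst p) (snd p)" by (auto simp: G0_iff)
      have "p \<in> A1" using a by (auto simp: D_tau_iff inbox_def A1_def)
      moreover have "p \<in> A2 i" using i by (simp add: G0'_def A2_def)
      moreover have "p \<in> A3 i" using i by (auto simp: G0'_def A3_def cnd_def R_set_iff)
      ultimately show "\<exists>i. p \<in> A1 \<and> p \<in> A2 i \<and> p \<in> A3 i" by blast
    next
      assume "\<exists>i. p \<in> A1 \<and> p \<in> A2 i \<and> p \<in> A3 i"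
      then obtain i where a1: "p \<in> A1" and a2: "p \<in> A2 i" and a3: "p \<in> A3 i" by blast
      have "G0' El r i (fst p) (snd p)"
        using a2 a3 by (auto simp: G0'_def A2_def A3_def cnd_def R_set_iff)
      moreover have "fst p \<in> D_tau" using a1 a2 by (auto simp: D_tau_iff inbox_def A1_def A2_def)
      ultimately show "fst p \<in> D_tau \<and> snd p \<in> G0 El r (fst p)" by (auto simp: G0_iff)
    qed
    then show "p \<in> {p. fst p \<in> D_tau \<and> snd p \<in> G0 El r (fst p)} \<longleftrightarrow> p \<in> (\<Union>i. A1 \<inter> A2 i \<inter> A3 i)"
      by simp
  qed
  have "closed (\<Union>i. A1 \<inter> A2 i \<inter> A3 i)"
    by (rule closed_UN) (auto intro!: closed_Int c1 c2 c3)
  then show ?thesis unfolding eq .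
qed

lemma G_hull_D:
  assumes "g \<in> G_hull El r \<tau>"
  shows "\<tau> \<in> D_tau \<and> g \<in> G0 El r \<tau>"
proof -
  have e: "{(\<sigma>, h). \<sigma> \<in> D_tau \<and> h \<in> G0 El r \<sigma>} = {p. fst p \<in> D_tau \<and> snd p \<in> G0 El r (fst p)}" by auto
  have "closure {p. fst p \<in> D_tau \<and> snd p \<in> G0 El r (fst p)} = {p. fst p \<in> D_tau \<and> snd p \<in> G0 El r (fst p)}"
    by (rule closure_closed[OF graph_closed])
  then have "(\<tau>, g) \<in> {p. fst p \<in> D_tau \<and> snd p \<in> G0 El r (fst p)}"
    using assms unfolding G_hull_def e by simp
  then show ?thesis by simp
qed



lemma dist_A_le_norm:
  assumes "a \<in> A_s" shows "dist_A (\<tau>, k) \<le> norm (\<tau> - a)"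
proof -
  have "(a, real k) \<in> A_set" using assms by (auto simp: A_set_def)
  then have "dist_A (\<tau>, k) \<le> dist (\<tau>, real k) (a, real k)"
    unfolding dist_A_def by (simp add: infdist_le)
  also have "\<dots> = norm (\<tau> - a)" by (simp add: dist_Pair_Pair dist_norm)
  finally show ?thesis .
qed

lemma comp_bound:
  assumes "0 \<le> x" "x \<le> 1" "0 \<le> p" "p \<le> 1" "pd x p \<le> c"
  shows "p \<le> c \<Longrightarrow> \<bar>x - (if \<bar>x - p\<bar> \<le> c then 0 else 1)\<bar> \<le> 2 * c"
    and "1 - c \<le> p \<Longrightarrow> \<bar>x - (if \<bar>x - p\<bar> \<le> c then 1 else 0)\<bar> \<le> 2 * c"
    and "c < p \<Longrightarrow> p < 1 - c \<Longrightarrow> \<bar>x - p\<bar> \<le> 2 * c"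
  using assms by (auto simp: pd_def min_def abs_if split: if_splits)

lemma dist_A_upper:
  fixes \<tau> :: "real^'n::finite"
  assumes box: "inbox \<tau>" and S: "syncB UNIV c \<tau>"
  shows "dist_A (\<tau>, k) \<le> 2 * real CARD('n) * c"
proof -
  define p where "p = \<tau> $ undefined"
  have pb: "0 \<le> p" "p \<le> 1" using box by (auto simp: inbox_def p_def)
  have xb: "0 \<le> \<tau>$j" "\<tau>$j \<le> 1" for j using box by (auto simp: inbox_def)
  have pdj: "pd (\<tau>$j) p \<le> c" for j using S by (simp add: syncB_def p_def)
  have c0: "0 \<le> c" using pdj[of undefined] by (simp add: p_def)
  obtain a where aA: "a \<in> A_s" and ab: "\<And>j. \<bar>\<tau>$j - a$j\<bar> \<le> 2 * c"
  proof (cases "p \<le> c")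
    case True
    let ?a = "\<chi> j. if \<bar>\<tau>$j - p\<bar> \<le> c then 0 else (1::real)"
    have "?a \<in> A_s" by (auto simp: A_s_def)
    moreover have "\<bar>\<tau>$j - ?a$j\<bar> \<le> 2 * c" for j
      using comp_bound(1)[OF xb(1,2) pb pdj True] by simp
    ultimately show ?thesis using that by blast
  next
    case F1: False
    show ?thesis
    proof (cases "1 - c \<le> p")
      case True
      let ?a = "\<chi> j. if \<bar>\<tau>$j - p\<bar> \<le> c then 1 else (0::real)"
      have "?a \<in> A_s" by (auto simp: A_s_def)
      moreover have "\<bar>\<tau>$j - ?a$j\<bar> \<le> 2 * c" for j
        using comp_bound(2)[OF xb(1,2) pb pdj True] by simp
      ultimately show ?thesis using that by blast
    next
      case False
      let ?a = "\<chi> j. p"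
      have "?a \<in> A_s" using pb by (auto simp: A_s_def)
      moreover have "\<bar>\<tau>$j - ?a$j\<bar> \<le> 2 * c" for j
        using comp_bound(3)[OF xb(1,2) pb pdj] F1 False by simp
      ultimately show ?thesis using that by blast
    qed
  qed
  have "dist_A (\<tau>, k) \<le> norm (\<tau> - a)" by (rule dist_A_le_norm[OF aA])
  also have "\<dots> \<le> (\<Sum>j\<in>UNIV. \<bar>(\<tau> - a)$j\<bar>)" by (rule norm_le_l1_cart)
  also have "\<dots> \<le> (\<Sum>j\<in>(UNIV::'n set). 2 * c)" by (rule sum_mono) (use ab in simp)
  also have "\<dots> = 2 * real CARD('n) * c" by simp
  finally show ?thesis .
qed

lemma pd_le_A:
  assumes "a \<in> A_s" shows "pd (\<tau>$i) (\<tau>$j) \<le> 2 * norm (\<tau> - a)"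
proof -
  have ei: "\<bar>\<tau>$i - a$i\<bar> \<le> norm (\<tau> - a)" using component_le_norm_cart[of "\<tau> - a" i] by simp
  have ej: "\<bar>\<tau>$j - a$j\<bar> \<le> norm (\<tau> - a)" using component_le_norm_cart[of "\<tau> - a" j] by simp
  have "a$i = a$j \<or> \<bar>a$i - a$j\<bar> = 1"
  proof -
    from assms have "(\<exists>\<mu>. a = (\<chi> i. \<mu>)) \<or> (\<forall>i. a$i \<in> {0,1})" by (auto simp: A_s_def)
    then show ?thesis
    proof
      assume "\<forall>i. a$i \<in> {0,1}"
      then have "a$i \<in> {0,1}" "a$j \<in> {0,1}" by auto
      then show ?thesis by auto
    qed auto
  qed
  then show ?thesis using ei ej by (auto simp: pd_def min_def abs_if split: if_splits)
qed

lemma dist_A_lower: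
  fixes \<tau> :: "real^'n::finite"
  shows "syncB UNIV (2 * dist_A (\<tau>, k)) \<tau>"
  unfolding syncB_def
proof (intro ballI)
  fix i j :: 'n
  have ne: "A_set \<noteq> ({} :: ((real^'n) \<times> real) set)"
  proof -
    have "((\<chi> i. 0) :: real^'n) \<in> A_s" by (auto simp: A_s_def)
    then have "(((\<chi> i. 0) :: real^'n), real 0) \<in> A_set" by (auto simp: A_set_def)
    then show ?thesis by blast
  qed
  have "pd (\<tau>$i) (\<tau>$j) / 2 \<le> dist_A (\<tau>, k)"
    unfolding dist_A_def infdist_notempty[OF ne]
  proof (rule cINF_greatest[OF ne])
    fix z :: "(real^'n) \<times> real" assume "z \<in> A_set"
    then obtain a k' where z: "z = (a, real k')" and a: "a \<in> A_s" by (auto simp: A_set_def)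
    have "pd (\<tau>$i) (\<tau>$j) \<le> 2 * norm (\<tau> - a)" by (rule pd_le_A[OF a])
    also have "norm (\<tau> - a) \<le> dist (fst (\<tau>, real k)) (fst z)" by (simp add: z dist_norm)
    also have "\<dots> \<le> dist (\<tau>, real k) z" by (rule dist_fst_le)
    finally show "pd (\<tau>$i) (\<tau>$j) / 2 \<le> dist (fst (\<tau>, k), real (snd (\<tau>, k))) z" by simp
  qed
  then show "pd (\<tau>$i) (\<tau>$j) \<le> 2 * dist_A (\<tau>, k)" by simp
qed



definition traj :: "(nat \<Rightarrow> ('n \<times> 'n) set) \<Rightarrow> real^'n \<Rightarrow> nat \<Rightarrow> (nat \<Rightarrow> real^'n) \<Rightarrow> (nat \<Rightarrow> real^'n) \<Rightarrow> (nat \<Rightarrow> real) \<Rightarrow> bool" where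
  "traj Gs r K s e d \<longleftrightarrow> inbox (s 0) \<and> (\<forall>j\<le>K. 0 \<le> d j \<and> e j = s j + (\<chi> i. d j) \<and> inbox (e j)) \<and>
     (\<forall>j<K. e j \<in> D_tau \<and> s (Suc j) \<in> G0 (Gs j) r (e j))"

definition fr :: "(nat \<Rightarrow> ('n \<times> 'n) set) \<Rightarrow> real^'n \<Rightarrow> (nat \<Rightarrow> real^'n) \<Rightarrow> (nat \<Rightarrow> real^'n) \<Rightarrow> nat \<Rightarrow> 'n" where
  "fr Gs r s e k = (SOME i. G0' (Gs k) r i (e k) (s (Suc k)))"

lemma fr_spec:
  assumes "traj Gs r K s e d" "k < K"
  shows "G0' (Gs k) r (fr Gs r s e k) (e k) (s (Suc k))"
proof -
  have "\<exists>i. G0' (Gs k) r i (e k) (s (Suc k))" using assms by (auto simp: traj_def G0_iff)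
  then show ?thesis unfolding fr_def by (rule someI_ex)
qed

lemma traj_e: "traj Gs r K s e d \<Longrightarrow> j \<le> K \<Longrightarrow> 0 \<le> d j \<and> e j = s j + (\<chi> i. d j) \<and> inbox (e j)"
  unfolding traj_def by blast

lemma traj_s_inbox:
  assumes "traj Gs r K s e d" "j \<le> K" shows "inbox (s j)"
proof (cases j)
  case 0 then show ?thesis using assms by (simp add: traj_def)
next
  case (Suc k)
  then have "k < K" using assms by simp
  have "inbox (e k)" using traj_e[OF assms(1) less_imp_le[OF \<open>k < K\<close>]] by blast
  from G0'_inbox[OF this fr_spec[OF assms(1) \<open>k < K\<close>]] show ?thesis using Suc by simp
qed

lemma traj_sync_step:
  assumes T: "traj Gs r K s e d" and k: "k < K" and S: "syncB Y c (s k)"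
    and act: "\<And>i y. (i, y) \<in> Gs k \<Longrightarrow> y \<in> Y \<Longrightarrow> i \<in> Y"
  shows "syncB Y c (s (Suc k))"
proof -
  have ek: "0 \<le> d k \<and> e k = s k + (\<chi> i. d k) \<and> inbox (e k)" using traj_e[OF T less_imp_le[OF k]] by blast
  then have "syncB Y c (e k)" using sync_flow[OF S] by simp
  then show ?thesis
    using sync_jump[OF _ fr_spec[OF T k]] ek act by blast
qed

lemma traj_sync_steps:
  assumes T: "traj Gs r K s e d" and jK: "j + n \<le> K" and S: "syncB Y c (s j)"
    and act: "\<And>k i y. j \<le> k \<Longrightarrow> k < j + n \<Longrightarrow> (i, y) \<in> Gs k \<Longrightarrow> y \<in> Y \<Longrightarrow> i \<in> Y"
  shows "syncB Y c (s (j + n))"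
  using jK act
proof (induction n)
  case 0 then show ?case using S by simp
next
  case (Suc n)
  have "syncB Y c (s (j + n))" using Suc.IH Suc.prems by auto
  moreover have "\<And>i y. (i, y) \<in> Gs (j + n) \<Longrightarrow> y \<in> Y \<Longrightarrow> i \<in> Y" using Suc.prems(2)[of "j+n"] by auto
  ultimately have "syncB Y c (s (Suc (j + n)))" using traj_sync_step[OF T, of "j + n" Y c] Suc.prems(1) by auto
  then show ?case by simp
qed

lemma traj_sync_e:
  assumes T: "traj Gs r K s e d" and "k \<le> K" "syncB Y c (s k)"
  shows "syncB Y c (e k)"
  using traj_e[OF T assms(2)] sync_flow[OF assms(3)] by simp

lemma traj_bound:
  assumes T: "traj Gs r K s e d" and S: "syncB UNIV c (s 0)"
  shows "syncB UNIV c (e K)"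
proof -
  have "syncB UNIV c (s (0 + K))" by (rule traj_sync_steps[OF T _ S]) auto
  then show ?thesis using traj_sync_e[OF T] by simp
qed



lemma r_min_le: "r_min (r::real^'n::finite) \<le> r$v"
  unfolding r_min_def by (rule Min_le) auto

lemma r_min_pos: assumes "\<forall>i. 0 < (r::real^'n::finite)$i" shows "0 < r_min r"
proof -
  have "r_min r \<in> range (\<lambda>i. r$i)" unfolding r_min_def by (rule Min_in) auto
  then show ?thesis using assms by auto
qed

lemma minR:
  assumes "g \<in> R_set El r i \<tau> v" "0 \<le> \<tau>$v" "0 < r$v"
  shows "min g (r$v) \<le> min (\<tau>$v) (r$v)"
  using assms by (auto simp: R_set_def split: if_splits)

lemma count_bound:
  fixes F :: nat and rv rm S :: real
  assumes "real F * rv - rv \<le> S" "S \<le> 1" "0 < rm" "rm \<le> rv"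
  shows "F \<le> nat \<lfloor>1 / rm\<rfloor> + 1"
proof -
  have rv: "0 < rv" using assms by simp
  have "(real F - 1) * rv \<le> 1" using assms by (simp add: algebra_simps)
  then have "real F - 1 \<le> 1 / rv" using rv by (simp add: pos_le_divide_eq)
  also have "1 / rv \<le> 1 / rm" using assms by (simp add: frac_le)
  finally have "of_int (int F - 1) \<le> 1 / rm" by simp
  then have "int F - 1 \<le> \<lfloor>1 / rm\<rfloor>" by (simp add: le_floor_iff)
  moreover have "0 \<le> \<lfloor>1 / rm\<rfloor>" using assms by simp
  ultimately show ?thesis by linarith
qed

lemma block_fire:
  fixes r :: "real^'n::finite"
  assumes T: "traj Gs r K s e d"
    and rpos: "\<forall>i. 0 < r$i \<and> r$i < 1"
    and mL: "m + ell_star r \<le> K"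
    and GG: "\<forall>k. m \<le> k \<longrightarrow> k < m + ell_star r \<longrightarrow> Gs k = G"
    and GU: "\<forall>i j. (i,j) \<in> G \<longrightarrow> i \<in> U"
    and UX: "U \<subseteq> X"
    and SX: "syncB X 0 (s m)"
    and u: "u \<in> U"
  shows "\<exists>k. m \<le> k \<and> k < m + ell_star r \<and> fr Gs r s e k = u"
proof (rule ccontr)
  assume nf0: "\<not> ?thesis"
  define L where "L = ell_star r"
  define f where "f = fr Gs r s e"
  have nf: "\<And>k. m \<le> k \<Longrightarrow> k < m + L \<Longrightarrow> f k \<noteq> u" using nf0 by (auto simp: L_def f_def)
  have mLK: "m + L \<le> K" using mL by (simp add: L_def)
  have Gk: "\<And>k. m \<le> k \<Longrightarrow> k < m + L \<Longrightarrow> Gs k = G" using GG by (simp add: L_def)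
  have fspec: "\<And>k. k < K \<Longrightarrow> G0' (Gs k) r (f k) (e k) (s (Suc k))" unfolding f_def by (rule fr_spec[OF T])
  have ek: "\<And>k. k \<le> K \<Longrightarrow> 0 \<le> d k \<and> e k = s k + (\<chi> i. d k) \<and> inbox (e k)" by (rule traj_e[OF T])
  have ekv: "\<And>k v. k \<le> K \<Longrightarrow> e k $ v = s k $ v + d k"
  proof -
    fix k v assume "k \<le> K"
    then have "e k = s k + (\<chi> i. d k)" using ek by blast
    then show "e k $ v = s k $ v + d k" by simp
  qed
  have sbox: "\<And>k. k \<le> K \<Longrightarrow> inbox (s k)" by (rule traj_s_inbox[OF T])
  have SXs: "syncB X 0 (s (m + j))" if "j \<le> L" for j
    by (rule traj_sync_steps[OF T _ SX]) (use that mLK Gk GU UX in auto)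
  have SXe: "syncB X 0 (e (m + j))" if "j \<le> L" for j
    by (rule traj_sync_e[OF T _ SXs[OF that]]) (use that mLK in auto)
  have ustep: "s (Suc (m + j)) $ u = e (m + j) $ u" if j: "j < L" for j
  proof -
    let ?k = "m + j"
    have kK: "?k < K" using j mLK by simp
    have G: "G0' G r (f ?k) (e ?k) (s (Suc ?k))" using fspec[OF kK] Gk[of ?k] j by simp
    have fu: "f ?k \<noteq> u" using nf j by simp
    then have R: "s (Suc ?k) $ u \<in> R_set G r (f ?k) (e ?k) u" using G by (simp add: G0'_def)
    show ?thesis
    proof (cases "(f ?k, u) \<in> G")
      case True
      then have "f ?k \<in> X" using GU UX by blast
      moreover have "u \<in> X" using u UX by blast
      ultimately have "pd (e ?k $ u) (e ?k $ f ?k) \<le> 0" using SXe[of j] j by (simp add: syncB_def)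
      moreover have "e ?k $ f ?k = 1" using G by (simp add: G0'_def)
      moreover have "0 \<le> e ?k $ u" "e ?k $ u \<le> 1" using ek[of ?k] kK by (auto simp: inbox_def)
      ultimately have "e ?k $ u = 0 \<or> e ?k $ u = 1" by (auto simp: pd_def min_def split: if_splits)
      then show ?thesis using R True rpos[rule_format, of u] by (auto simp: R_set_def)
    next
      case False
      then show ?thesis using R by (simp add: R_set_def)
    qed
  qed
  have usum: "s (m + j) $ u = s m $ u + (\<Sum>k\<in>{m..<m + j}. d k)" if "j \<le> L" for j
    using that
  proof (induction j)
    case 0 then show ?case by simp
  next
    case (Suc j)
    have "s (m + Suc j) $ u = e (m + j) $ u" using ustep[of j] Suc.prems by simp
    also have "\<dots> = s (m + j) $ u + d (m + j)" using ekv[of "m + j" u] Suc.prems mLK by simp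
    also have "\<dots> = s m $ u + (\<Sum>k\<in>{m..<m + j}. d k) + d (m + j)" using Suc by simp
    also have "\<dots> = s m $ u + (\<Sum>k\<in>{m..<m + Suc j}. d k)" by simp
    finally show ?case .
  qed
  have sumle: "(\<Sum>k\<in>{m..<m + L}. d k) \<le> 1"
  proof -
    have "s (m + L) $ u \<le> 1" "0 \<le> s m $ u" using sbox[of "m + L"] sbox[of m] mLK by (auto simp: inbox_def)
    then show ?thesis using usum[of L] by simp
  qed
  define F where "F v j = (\<Sum>k\<in>{m..<m + j}. if f k = v then 1 else 0 :: nat)" for v j
  have inv: "real (F v j) * r$v + min (s (m + j) $ v) (r$v) - r$v \<le> (\<Sum>k\<in>{m..<m + j}. d k)"
    if "j \<le> L" for v j
    using that
  proof (induction j)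
    case 0
    have "min (s m $ v) (r$v) \<le> r$v" by simp
    then show ?case by (simp add: F_def)
  next
    case (Suc j)
    let ?k = "m + j"
    have kK: "?k < K" using Suc.prems mLK by simp
    have IH: "real (F v j) * r$v + min (s ?k $ v) (r$v) - r$v \<le> (\<Sum>k\<in>{m..<?k}. d k)"
      using Suc by simp
    have Fs: "F v (Suc j) = F v j + (if f ?k = v then 1 else 0)" by (simp add: F_def)
    have sums: "(\<Sum>k\<in>{m..<m + Suc j}. d k) = (\<Sum>k\<in>{m..<?k}. d k) + d ?k" by simp
    have ev: "e ?k $ v = s ?k $ v + d ?k" using ekv[of ?k v] kK by simp
    have G: "G0' (Gs ?k) r (f ?k) (e ?k) (s (Suc ?k))" using fspec[OF kK] .
    have sv0: "0 \<le> s ?k $ v" using sbox[of ?k] kK by (auto simp: inbox_def)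
    have d0: "0 \<le> d ?k" using ek[of ?k] kK by simp
    have rv: "0 < r$v" "r$v < 1" using rpos by auto
    show ?case
    proof (cases "f ?k = v")
      case True
      then have "e ?k $ v = 1" "s (Suc ?k) $ v = 0" using G by (auto simp: G0'_def)
      then show ?thesis using IH Fs sums ev True rv sv0 d0
        by (simp add: algebra_simps min_def split: if_splits)
    next
      case False
      then have "s (Suc ?k) $ v \<in> R_set (Gs ?k) r (f ?k) (e ?k) v" using G by (simp add: G0'_def)
      then have "min (s (Suc ?k) $ v) (r$v) \<le> min (e ?k $ v) (r$v)"
        by (rule minR) (use ev sv0 d0 rv in auto)
      moreover have "min (e ?k $ v) (r$v) \<le> min (s ?k $ v) (r$v) + d ?k" using ev d0 by (simp add: min_def)
      ultimately show ?thesis using IH Fs sums False by simp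
    qed
  qed
  define B where "B = nat \<lfloor>1 / r_min r\<rfloor> + 1"
  have Fb: "F v L \<le> B" for v
  proof -
    have rv0: "0 < r$v" using rpos by auto
    have "0 \<le> s (m + L) $ v" using sbox[of "m + L"] mLK by (auto simp: inbox_def)
    then have "0 \<le> min (s (m + L) $ v) (r$v)" using rv0 by simp
    then have "real (F v L) * r$v - r$v \<le> (\<Sum>k\<in>{m..<m + L}. d k)" using inv[of L v] by linarith
    then show ?thesis unfolding B_def
      by (rule count_bound[OF _ sumle r_min_pos r_min_le]) (use rpos in auto)
  qed
  have Fu: "F u L = 0" using nf by (simp add: F_def)
  have Fsum: "(\<Sum>v\<in>UNIV. F v L) = L"
  proof -
    have "(\<Sum>v\<in>UNIV. F v L) = (\<Sum>k\<in>{m..<m + L}. \<Sum>v\<in>UNIV. if f k = v then 1 else 0 :: nat)"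
      unfolding F_def by (rule sum.swap)
    also have "\<dots> = (\<Sum>k\<in>{m..<m + L}. 1)" by simp
    also have "\<dots> = L" by simp
    finally show ?thesis .
  qed
  have "(\<Sum>v\<in>UNIV. F v L) = F u L + (\<Sum>v\<in>UNIV - {u}. F v L)" by (simp add: sum.remove)
  also have "\<dots> \<le> 0 + card (UNIV - {u} :: 'n set) * B"
  proof -
    have "(\<Sum>v\<in>UNIV - {u}. F v L) \<le> of_nat (card (UNIV - {u} :: 'n set)) * B"
      by (rule sum_bounded_above) (rule Fb)
    then show ?thesis using Fu by simp
  qed
  also have "\<dots> = (CARD('n) - 1) * B" by (simp add: card_Diff_singleton)
  finally have le: "L \<le> (CARD('n) - 1) * B" using Fsum by simp
  have "L = CARD('n) * B" by (simp add: L_def ell_star_def B_def)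
  moreover have "0 < CARD('n)" by simp
  moreover have "0 < B" by (simp add: B_def)
  ultimately show False using le
    by (metis Suc_diff_1 diff_less less_imp_le_nat mult_less_cancel2 not_less zero_less_one)
qed



lemma pd_trans0:
  assumes "0 \<le> a" "a \<le> 1" "0 \<le> b" "b \<le> 1" "0 \<le> c" "c \<le> 1" "pd a c \<le> 0" "pd b c \<le> 0"
  shows "pd a b \<le> 0"
  using assms by (auto simp: pd_def min_def abs_if split: if_splits)

lemma block_sync:
  fixes r :: "real^'n::finite"
  assumes T: "traj Gs r K s e d"
    and rpos: "\<forall>i. 0 < r$i \<and> r$i < 1"
    and mL: "m + ell_star r \<le> K"
    and GG: "\<forall>k. m \<le> k \<longrightarrow> k < m + ell_star r \<longrightarrow> Gs k = G"
    and GU: "\<forall>i j. (i,j) \<in> G \<longrightarrow> i \<in> U"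
    and UX: "U \<subseteq> X"
    and SX: "syncB X 0 (s m)"
  shows "syncB (X \<union> {w. \<exists>u\<in>U. (u,w) \<in> G}) 0 (s (m + ell_star r))"
proof -
  define L where "L = ell_star r"
  define f where "f = fr Gs r s e"
  have mLK: "m + L \<le> K" using mL by (simp add: L_def)
  have Gk: "\<And>k. m \<le> k \<Longrightarrow> k < m + L \<Longrightarrow> Gs k = G" using GG by (simp add: L_def)
  have fspec: "\<And>k. k < K \<Longrightarrow> G0' (Gs k) r (f k) (e k) (s (Suc k))" unfolding f_def by (rule fr_spec[OF T])
  have ek: "\<And>k. k \<le> K \<Longrightarrow> 0 \<le> d k \<and> e k = s k + (\<chi> i. d k) \<and> inbox (e k)" by (rule traj_e[OF T])
  have sbox: "\<And>k. k \<le> K \<Longrightarrow> inbox (s k)" by (rule traj_s_inbox[OF T])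
  have SXs: "syncB X 0 (s (m + j))" if "j \<le> L" for j
    by (rule traj_sync_steps[OF T _ SX]) (use that mLK Gk GU UX in auto)
  have SXe: "syncB X 0 (e (m + j))" if "j \<le> L" for j
    by (rule traj_sync_e[OF T _ SXs[OF that]]) (use that mLK in auto)
  have Yu: "syncB (X \<union> {w. (u,w) \<in> G}) 0 (s (m + L))" if u: "u \<in> U" for u
  proof -
    obtain k where k: "m \<le> k" "k < m + L" "f k = u"
      using block_fire[OF T rpos mL GG GU UX SX u] by (auto simp: L_def f_def)
    have kK: "k < K" using k mLK by simp
    have G: "G0' G r u (e k) (s (Suc k))" using fspec[OF kK] Gk[OF k(1,2)] k(3) by simp
    have eu: "e k $ u = 1" using G by (simp add: G0'_def)
    have ebox: "inbox (e k)" using ek[OF less_imp_le[OF kK]] by blast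
    have SXek: "syncB X 0 (e k)" using SXe[of "k - m"] k by simp
    have new01: "s (Suc k) $ y = 0 \<or> s (Suc k) $ y = 1" if y: "y \<in> X \<union> {w. (u,w) \<in> G}" for y
    proof (cases "y = u")
      case True then show ?thesis using G by (simp add: G0'_def)
    next
      case False
      then have R: "s (Suc k) $ y \<in> R_set G r u (e k) y" using G by (simp add: G0'_def)
      show ?thesis
      proof (cases "(u, y) \<in> G")
        case True then show ?thesis using R by (auto simp: R_set_def split: if_splits)
      next
        case False
        then have yX: "y \<in> X" and sy: "s (Suc k) $ y = e k $ y" using y R by (auto simp: R_set_def)
        have "pd (e k $ y) (e k $ u) \<le> 0" using SXek yX u UX by (auto simp: syncB_def)
        moreover have "0 \<le> e k $ y" "e k $ y \<le> 1" using ebox by (auto simp: inbox_def)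
        ultimately show ?thesis using eu sy by (auto simp: pd_def min_def split: if_splits)
      qed
    qed
    have S1: "syncB (X \<union> {w. (u,w) \<in> G}) 0 (s (Suc k))"
      unfolding syncB_def
    proof (intro ballI)
      fix a b assume "a \<in> X \<union> {w. (u,w) \<in> G}" "b \<in> X \<union> {w. (u,w) \<in> G}"
      then show "pd (s (Suc k) $ a) (s (Suc k) $ b) \<le> 0"
        using new01[of a] new01[of b] by (auto simp: pd_def)
    qed
    have "syncB (X \<union> {w. (u,w) \<in> G}) 0 (s (Suc k + (m + L - Suc k)))"
      by (rule traj_sync_steps[OF T _ S1]) (use k mLK Gk GU UX in auto)
    then show ?thesis using k by simp
  qed
  show ?thesis
  proof (cases "U = {}")
    case True
    then show ?thesis using SXs[of L] by (simp add: L_def)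
  next
    case False
    then obtain u0 where u0: "u0 \<in> U" by blast
    have endbox: "inbox (s (m + L))" using sbox mLK by simp
    have toU0: "pd (s (m + L) $ a) (s (m + L) $ u0) \<le> 0" if a: "a \<in> X \<union> {w. \<exists>u\<in>U. (u,w) \<in> G}" for a
    proof -
      obtain u where u: "u \<in> U" and au: "a \<in> X \<union> {w. (u,w) \<in> G}" using a u0 by blast
      have "u0 \<in> X \<union> {w. (u,w) \<in> G}" using u0 UX by blast
      then show ?thesis using Yu[OF u] au by (simp add: syncB_def)
    qed
    show ?thesis unfolding syncB_def L_def[symmetric]
    proof (intro ballI)
      fix a b assume a: "a \<in> X \<union> {w. \<exists>u\<in>U. (u,w) \<in> G}" and b: "b \<in> X \<union> {w. \<exists>u\<in>U. (u,w) \<in> G}"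
      show "pd (s (m + L) $ a) (s (m + L) $ b) \<le> 0"
        by (rule pd_trans0[OF _ _ _ _ _ _ toU0[OF a] toU0[OF b]]) (use endbox in \<open>auto simp: inbox_def\<close>)
    qed
  qed
qed



lemma path_take:
  assumes "is_path E p" "0 < n" "n \<le> length p"
  shows "is_path E (take n p)"
  using assms by (auto simp: is_path_def)

lemma path_snoc:
  assumes "is_path E p" "w \<notin> set p" "(last p, w) \<in> E"
  shows "is_path E (p @ [w])"
  unfolding is_path_def
proof (intro conjI allI impI)
  show "p @ [w] \<noteq> []" by simp
  show "distinct (p @ [w])" using assms by (simp add: is_path_def)
  fix k assume k: "Suc k < length (p @ [w])"
  show "((p @ [w]) ! k, (p @ [w]) ! Suc k) \<in> E"
  proof (cases "Suc k < length p")
    case True then show ?thesis using assms(1) by (simp add: is_path_def nth_append)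
  next
    case False
    then have kk: "k = length p - 1" "k < length p" using k by simp_all
    moreover have "p \<noteq> []" using assms(1) by (simp add: is_path_def)
    ultimately show ?thesis using assms(3) by (simp add: nth_append last_conv_nth)
  qed
qed

lemma sp_dist_ex:
  assumes "is_root E i"
  shows "\<exists>p. is_path E p \<and> hd p = i \<and> last p = j \<and> length p = Suc (sp_dist E i j)"
proof -
  obtain p where p: "is_path E p" "hd p = i" "last p = j" using assms by (auto simp: is_root_def)
  then have "length p = Suc (length p - 1)" by (cases p) (auto simp: is_path_def)
  then have "\<exists>q p. is_path E p \<and> hd p = i \<and> last p = j \<and> length p = Suc q" using p by blast
  then show ?thesis unfolding sp_dist_def by (rule LeastI_ex)
qed

lemma sp_dist_le:
  assumes "is_path E p" "hd p = i" "last p = j"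
  shows "sp_dist E i j \<le> length p - 1"
proof -
  have "length p = Suc (length p - 1)" using assms by (cases p) (auto simp: is_path_def)
  then show ?thesis unfolding sp_dist_def using assms by (intro Least_le) blast
qed

lemma sp_dist_0:
  assumes "is_root E i" "sp_dist E i j = 0" shows "j = i"
proof -
  obtain p where p: "is_path E p" "hd p = i" "last p = j" "length p = Suc 0"
    using sp_dist_ex[OF assms(1), of j] assms(2) by auto
  then obtain x where "p = [x]" by (cases p) auto
  then show ?thesis using p by simp
qed

lemma sp_dist_pred:
  assumes R: "is_root E i" and w: "sp_dist E i w = Suc q"
  shows "\<exists>u. sp_dist E i u = q \<and> (u, w) \<in> E"
proof -
  obtain p where p: "is_path E p" "hd p = i" "last p = w" "length p = Suc (Suc q)"
    using sp_dist_ex[OF R, of w] w by auto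
  define u where "u = p ! q"
  have ne: "p \<noteq> []" using p by auto
  have uw: "(u, w) \<in> E"
  proof -
    have "(p ! q, p ! Suc q) \<in> E" using p by (simp add: is_path_def)
    moreover have "p ! Suc q = w" using p ne by (simp add: last_conv_nth)
    ultimately show ?thesis by (simp add: u_def)
  qed
  have pt: "is_path E (take (Suc q) p)" by (rule path_take[OF p(1)]) (use p in auto)
  have "hd (take (Suc q) p) = i" using p ne by simp
  moreover have "last (take (Suc q) p) = u" using p by (subst last_conv_nth) (auto simp: u_def)
  ultimately have le: "sp_dist E i u \<le> q" using sp_dist_le[OF pt] p by simp
  have ge: "\<not> sp_dist E i u < q"
  proof
    assume lt: "sp_dist E i u < q"
    obtain p' where p': "is_path E p'" "hd p' = i" "last p' = u" "length p' = Suc (sp_dist E i u)"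
      using sp_dist_ex[OF R, of u] by auto
    show False
    proof (cases "w \<in> set p'")
      case True
      then obtain t where t: "t < length p'" "p' ! t = w" by (auto simp: in_set_conv_nth)
      have pt': "is_path E (take (Suc t) p')" by (rule path_take[OF p'(1)]) (use t in auto)
      have "hd (take (Suc t) p') = i" using p' t by (cases p') auto
      moreover have "last (take (Suc t) p') = w" using t by (subst last_conv_nth) auto
      ultimately have "sp_dist E i w \<le> length (take (Suc t) p') - 1" using sp_dist_le[OF pt'] by simp
      then show False using w t lt p' by simp
    next
      case False
      have pp: "is_path E (p' @ [w])" by (rule path_snoc[OF p'(1) False]) (use p' uw in simp)
      have ne': "p' \<noteq> []" using p' by (simp add: is_path_def)
      have "hd (p' @ [w]) = i" using p' ne' by simp
      moreover have "last (p' @ [w]) = w" by simp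
      ultimately have "sp_dist E i w \<le> length (p' @ [w]) - 1" using sp_dist_le[OF pp] by simp
      then show False using w lt p' by simp
    qed
  qed
  show ?thesis using le ge uw by (intro exI[of _ u]) simp
qed

lemma sp_dist_max: "sp_dist E i j \<le> max_dist E (i::'n::finite)"
  unfolding max_dist_def by (rule Max_ge) auto

lemma level_graph_iff: "(a, b) \<in> level_graph E i q \<longleftrightarrow> sp_dist E i a = q \<and> (a, b) \<in> E"
  by (auto simp: level_graph_def level_set_def out_edges_def)

lemma concat_rep_len:
  "length (concat (map (\<lambda>q. replicate L (g q)) [0..<Q])) = Q * L"
  by (induction Q) auto

lemma concat_rep_nth:
  "q < Q \<Longrightarrow> t < L \<Longrightarrow> concat (map (\<lambda>q. replicate L (g q)) [0..<Q]) ! (q * L + t) = g q"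
proof (induction Q)
  case 0 then show ?case by simp
next
  case (Suc Q)
  show ?case
  proof (cases "q < Q")
    case True
    have a: "q * L + t < Suc q * L" using Suc.prems by simp
    have b: "Suc q * L \<le> Q * L" using True by (intro mult_le_mono1) simp
    from a b have "q * L + t < Q * L" by linarith
    then show ?thesis using Suc True by (simp add: nth_append concat_rep_len)
  next
    case False
    then have "q = Q" using Suc.prems by simp
    then show ?thesis using Suc.prems by (simp add: nth_append concat_rep_len)
  qed
qed

lemma sync_string_len: "length (sync_string E r i) = max_dist E i * ell_star r"
  by (simp add: sync_string_def concat_rep_len)

lemma sync_string_nth:
  "q < max_dist E i \<Longrightarrow> t < ell_star r \<Longrightarrow> sync_string E r i ! (q * ell_star r + t) = level_graph E i q"
  unfolding sync_string_def by (rule concat_rep_nth)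



lemma syncB_mono: "Y' \<subseteq> Y \<Longrightarrow> syncB Y c \<tau> \<Longrightarrow> syncB Y' c \<tau>"
  by (auto simp: syncB_def)

lemma zeta_sync:
  fixes r :: "real^'n::finite"
  assumes T: "traj Gs r K s e d"
    and rpos: "\<forall>i. 0 < r$i \<and> r$i < 1"
    and R: "is_root E i"
    and occ: "\<forall>k < length (sync_string E r i). Gs (m + k) = sync_string E r i ! k"
    and mK: "m + length (sync_string E r i) \<le> K"
  shows "syncB UNIV 0 (s (m + length (sync_string E r i)))"
proof -
  define L where "L = ell_star r"
  define Q where "Q = max_dist E i"
  have len: "length (sync_string E r i) = Q * L" by (simp add: sync_string_len Q_def L_def)
  have main: "syncB {j. sp_dist E i j \<le> q} 0 (s (m + q * L))" if "q \<le> Q" for q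
    using that
  proof (induction q)
    case 0
    have "\<And>a. a \<in> {j. sp_dist E i j \<le> 0} \<Longrightarrow> a = i" using sp_dist_0[OF R] by auto
    then show ?case unfolding syncB_def by (metis order_refl pd_same)
  next
    case (Suc q)
    have qQ: "q < Q" using Suc.prems by simp
    have IH: "syncB {j. sp_dist E i j \<le> q} 0 (s (m + q * L))" using Suc.IH qQ by simp
    have le1: "Suc q * L \<le> Q * L" using qQ by (intro mult_le_mono1) simp
    have mL: "m + q * L + ell_star r \<le> K" using mK le1 len by (simp add: L_def)
    have GG: "\<forall>k. m + q * L \<le> k \<longrightarrow> k < m + q * L + ell_star r \<longrightarrow> Gs k = level_graph E i q"
    proof (intro allI impI)
      fix k assume k1: "m + q * L \<le> k" and k2: "k < m + q * L + ell_star r"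
      define t where "t = k - (m + q * L)"
      have t: "t < L" "k = m + (q * L + t)" using k1 k2 by (auto simp: t_def L_def)
      have "q * L + t < Q * L" using t le1 by simp
      then have "Gs k = sync_string E r i ! (q * L + t)" using occ len t by simp
      also have "\<dots> = level_graph E i q" using sync_string_nth[OF qQ[unfolded Q_def]] t by (simp add: L_def)
      finally show "Gs k = level_graph E i q" .
    qed
    have GU: "\<forall>a b. (a, b) \<in> level_graph E i q \<longrightarrow> a \<in> {u. sp_dist E i u = q}"
      by (simp add: level_graph_iff)
    have UX: "{u. sp_dist E i u = q} \<subseteq> {j. sp_dist E i j \<le> q}" by auto
    have B: "syncB ({j. sp_dist E i j \<le> q} \<union> {w. \<exists>u\<in>{u. sp_dist E i u = q}. (u, w) \<in> level_graph E i q}) 0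
              (s (m + q * L + ell_star r))"
      by (rule block_sync[OF T rpos mL GG GU UX IH])
    have sub: "{j. sp_dist E i j \<le> Suc q} \<subseteq> {j. sp_dist E i j \<le> q} \<union> {w. \<exists>u\<in>{u. sp_dist E i u = q}. (u, w) \<in> level_graph E i q}"
    proof
      fix w assume "w \<in> {j. sp_dist E i j \<le> Suc q}"
      then have "sp_dist E i w \<le> q \<or> sp_dist E i w = Suc q" by auto
      then show "w \<in> {j. sp_dist E i j \<le> q} \<union> {w. \<exists>u\<in>{u. sp_dist E i u = q}. (u, w) \<in> level_graph E i q}"
      proof
        assume "sp_dist E i w = Suc q"
        from sp_dist_pred[OF R this] show ?thesis by (auto simp: level_graph_iff)
      qed simp
    qed
    have "m + Suc q * L = m + q * L + ell_star r" by (simp add: L_def)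
    then show ?case using syncB_mono[OF sub B] by (simp add: add.commute add.left_commute)
  qed
  have "syncB {j. sp_dist E i j \<le> Q} 0 (s (m + Q * L))" by (rule main) simp
  moreover have "{j. sp_dist E i j \<le> Q} = UNIV" using sp_dist_max by (auto simp: Q_def)
  ultimately show ?thesis using len by simp
qed

lemma traj_final:
  fixes r :: "real^'n::finite"
  assumes T: "traj Gs r K s e d"
    and rpos: "\<forall>i. 0 < r$i \<and> r$i < 1"
    and R: "is_root E i"
    and occ: "\<forall>k < length (sync_string E r i). Gs (m + k) = sync_string E r i ! k"
    and mK: "m + length (sync_string E r i) \<le> K"
  shows "syncB UNIV 0 (e K)"
proof -
  define n where "n = m + length (sync_string E r i)"
  have S: "syncB UNIV 0 (s n)" using zeta_sync[OF T rpos R occ mK] by (simp add: n_def)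
  have "syncB UNIV 0 (s (n + (K - n)))" by (rule traj_sync_steps[OF T _ S]) (use mK n_def in auto)
  then have "syncB UNIV 0 (s K)" using mK by (simp add: n_def)
  then show ?thesis by (rule traj_sync_e[OF T order_refl])
qed



lemma flow_affine:
  fixes y :: "real \<Rightarrow> real^'n::finite"
  assumes ab: "a \<le> b" and cont: "continuous_on {a..b} y"
    and der: "\<And>t. a < t \<Longrightarrow> t < b \<Longrightarrow> (y has_vector_derivative c) (at t)"
    and t: "t \<in> {a..b}"
  shows "y t = y a + (t - a) *\<^sub>R c"
proof -
  define f where "f t = y t - (t - a) *\<^sub>R c" for t
  have "f t = y a"
  proof (rule has_derivative_zero_unique_strong_interval[of "{a,b}"])
    show "finite {a, b}" by simp
    show "continuous_on {a..b} f" unfolding f_def by (intro continuous_intros cont)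
    show "f a = y a" by (simp add: f_def)
    show "t \<in> {a..b}" by (rule t)
    fix z assume z: "z \<in> {a..b} - {a, b}"
    then have "a < z" "z < b" by auto
    have d1: "((\<lambda>t. (t - a) *\<^sub>R c) has_vector_derivative c) (at z)"
    proof -
      have "((\<lambda>t. (t - a) *\<^sub>R c) has_vector_derivative ((z - a) *\<^sub>R 0 + 1 *\<^sub>R c)) (at z)"
        by (intro has_vector_derivative_scaleR derivative_eq_intros) auto
      then show ?thesis by simp
    qed
    have "(f has_vector_derivative (c - c)) (at z)"
      unfolding f_def by (rule has_vector_derivative_diff[OF der[OF \<open>a < z\<close> \<open>z < b\<close>] d1])
    then have "(f has_derivative (\<lambda>h. 0)) (at z)" by (simp add: has_vector_derivative_def)
    then show "(f has_derivative (\<lambda>h. 0)) (at z within {a..b})" by (rule has_derivative_at_withinI)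
  qed
  then show ?thesis by (simp add: f_def algebra_simps)
qed

lemma C_set_closed: "closed (C_set :: ((real^'n::finite) \<times> nat) set)"
proof -
  have "C_set = {p :: (real^'n) \<times> nat. \<forall>i. 0 \<le> fst p $ i \<and> fst p $ i \<le> 1}" by (auto simp: C_set_def)
  moreover have cc: "continuous_on UNIV (\<lambda>p :: (real^'n) \<times> nat. fst p $ i)" for i by (intro continuous_intros)
  moreover have "closed {p :: (real^'n) \<times> nat. \<forall>i. 0 \<le> fst p $ i \<and> fst p $ i \<le> 1}"
    apply (rule closed_Collect_all)
    apply (rule closed_Collect_conj)
     apply (rule closed_Collect_le[OF continuous_on_const cc])
    apply (rule closed_Collect_le[OF cc continuous_on_const])
    done
  ultimately show ?thesis by simp
qed



lemma sol_traj:
  fixes x :: "real \<times> nat \<Rightarrow> (real^'n::finite) \<times> nat"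
  assumes sol: "is_solution Tp \<xi> r hdom x" and Tp: "0 < Tp" and TK: "(T, K) \<in> hdom"
  shows "\<exists>s e d. traj (\<lambda>j. \<xi> (snd (x (0,0)) + Suc j)) r K s e d \<and> s 0 = fst (x (0,0)) \<and>
           e K = fst (x (T, K)) \<and> T \<le> real (Suc K) * Tp"
proof -
  have htd: "hybrid_time_domain hdom" and init: "x (0, 0) \<in> closure C_set \<union> D_set"
    and flow: "\<And>j. continuous_on {t. (t, j) \<in> hdom} (\<lambda>t. fst (x (t, j))) \<and>
        (\<forall>t\<in>{t. (t, j) \<in> hdom}. \<forall>t'\<in>{t. (t, j) \<in> hdom}. snd (x (t, j)) = snd (x (t', j))) \<and>
        (\<forall>t\<in>interior {t. (t, j) \<in> hdom}. x (t, j) \<in> C_set \<and>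
           ((\<lambda>s. fst (x (s, j))) has_vector_derivative ((\<chi> i. 1 / Tp) :: real^'n)) (at t))"
    and jmp: "\<And>t j. (t, j) \<in> hdom \<Longrightarrow> (t, Suc j) \<in> hdom \<Longrightarrow>
        x (t, j) \<in> D_set \<and>
        fst (x (t, Suc j)) \<in> G_hull (\<xi> (Suc (snd (x (t, j))))) r (fst (x (t, j))) \<and>
        snd (x (t, Suc j)) = Suc (snd (x (t, j)))"
    using sol unfolding is_solution_def Let_def by blast+
  have "compact_htd (hdom \<inter> ({0..T} \<times> {0..K}))" using htd TK by (auto simp: hybrid_time_domain_def)
  then obtain J tt where tt0: "tt 0 = 0" and mono: "\<forall>j\<le>J. tt j \<le> tt (Suc j)"
    and Seq: "hdom \<inter> ({0..T} \<times> {0..K}) = (\<Union>j\<in>{0..J}. {tt j..tt (Suc j)} \<times> {j})"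
    unfolding compact_htd_def by blast
  have T0: "0 \<le> T" using htd TK by (auto simp: hybrid_time_domain_def)
  have "(T, K) \<in> hdom \<inter> ({0..T} \<times> {0..K})" using TK T0 by simp
  then have TKU: "(T, K) \<in> (\<Union>j\<in>{0..J}. {tt j..tt (Suc j)} \<times> {j})" unfolding Seq .
  then have KJ: "K \<le> J" by auto
  have "(tt J, J) \<in> (\<Union>j\<in>{0..J}. {tt j..tt (Suc j)} \<times> {j})" using mono by auto
  then have "(tt J, J) \<in> hdom \<inter> ({0..T} \<times> {0..K})" unfolding Seq .
  then have "J \<le> K" by simp
  with KJ have JK: "J = K" by simp
  have "(tt (Suc K), K) \<in> (\<Union>j\<in>{0..J}. {tt j..tt (Suc j)} \<times> {j})" using mono JK by auto
  then have "(tt (Suc K), K) \<in> hdom \<inter> ({0..T} \<times> {0..K})" unfolding Seq .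
  then have "tt (Suc K) \<le> T" by simp
  moreover have "T \<le> tt (Suc K)" using TKU by auto
  ultimately have Tt: "T = tt (Suc K)" by simp
  have monoK: "\<And>j. j \<le> K \<Longrightarrow> tt j \<le> tt (Suc j)" using mono JK by simp
  have mem: "\<And>j t. j \<le> K \<Longrightarrow> tt j \<le> t \<Longrightarrow> t \<le> tt (Suc j) \<Longrightarrow> (t, j) \<in> hdom"
  proof -
    fix j t assume "j \<le> K" "tt j \<le> t" "t \<le> tt (Suc j)"
    then have "(t, j) \<in> (\<Union>j\<in>{0..J}. {tt j..tt (Suc j)} \<times> {j})" using JK by auto
    then have "(t, j) \<in> hdom \<inter> ({0..T} \<times> {0..K})" unfolding Seq .
    then show "(t, j) \<in> hdom" by simp
  qed
  define c :: "real^'n" where "c = (\<chi> i. 1 / Tp)"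
  have aff: "fst (x (t, j)) = fst (x (tt j, j)) + (t - tt j) *\<^sub>R c"
    if j: "j \<le> K" and t: "t \<in> {tt j..tt (Suc j)}" for j t
  proof (rule flow_affine[OF monoK[OF j] _ _ t])
    have sub: "{tt j..tt (Suc j)} \<subseteq> {t. (t, j) \<in> hdom}" using mem j by auto
    show "continuous_on {tt j..tt (Suc j)} (\<lambda>t. fst (x (t, j)))"
      using continuous_on_subset[OF _ sub] flow[of j] by blast
    fix z assume "tt j < z" "z < tt (Suc j)"
    then have "z \<in> interior {tt j..tt (Suc j)}" by simp
    then have "z \<in> interior {t. (t, j) \<in> hdom}" using interior_mono[OF sub] by blast
    then show "((\<lambda>t. fst (x (t, j))) has_vector_derivative c) (at z)" using flow[of j] by (simp add: c_def)
  qed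
  have inC: "x (t, j) \<in> C_set" if j: "j \<le> K" and "tt j < t" "t < tt (Suc j)" for j t
  proof -
    have sub: "{tt j..tt (Suc j)} \<subseteq> {t. (t, j) \<in> hdom}" using mem j by auto
    have "t \<in> interior {tt j..tt (Suc j)}" using that by simp
    then have "t \<in> interior {t. (t, j) \<in> hdom}" using interior_mono[OF sub] by blast
    then show ?thesis using flow[of j] by blast
  qed
  have lamc: "snd (x (tt (Suc j), j)) = snd (x (tt j, j))" if j: "j \<le> K" for j
  proof -
    have "(tt (Suc j), j) \<in> hdom" "(tt j, j) \<in> hdom" using mem[OF j] monoK[OF j] by auto
    then show ?thesis using flow[of j] by blast
  qed
  have jump: "x (tt (Suc j), j) \<in> D_set \<and>
        fst (x (tt (Suc j), Suc j)) \<in> G_hull (\<xi> (Suc (snd (x (tt (Suc j), j))))) r (fst (x (tt (Suc j), j))) \<and>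
        snd (x (tt (Suc j), Suc j)) = Suc (snd (x (tt (Suc j), j)))" if j: "j < K" for j
  proof (rule jmp)
    show "(tt (Suc j), j) \<in> hdom" using mem[of j] monoK[of j] j by simp
    show "(tt (Suc j), Suc j) \<in> hdom" using mem[of "Suc j"] monoK[of "Suc j"] j by simp
  qed
  have lamj: "snd (x (tt j, j)) = snd (x (0, 0)) + j" if "j \<le> K" for j
    using that
  proof (induction j)
    case 0 then show ?case using tt0 by simp
  next
    case (Suc j)
    then show ?case using jump[of j] lamc[of j] by simp
  qed
  define s where "s j = fst (x (tt j, j))" for j
  define e where "e j = fst (x (tt (Suc j), j))" for j
  define d where "d j = (tt (Suc j) - tt j) / Tp" for j
  have ed: "e j = s j + (\<chi> i. d j)" if j: "j \<le> K" for j
  proof -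
    have "e j = s j + (tt (Suc j) - tt j) *\<^sub>R c" unfolding e_def s_def
      by (rule aff[OF j]) (use monoK[OF j] in auto)
    also have "(tt (Suc j) - tt j) *\<^sub>R c = (\<chi> i. d j)" by (simp add: c_def d_def vec_eq_iff)
    finally show ?thesis .
  qed
  have d0: "0 \<le> d j" if "j \<le> K" for j using monoK[OF that] Tp by (simp add: d_def)
  have s0: "s 0 = fst (x (0, 0))" by (simp add: s_def tt0)
  have box0: "inbox (s 0)"
  proof -
    have cl: "closure (C_set :: ((real^'n) \<times> nat) set) = C_set" by (rule closure_closed[OF C_set_closed])
    have "x (0, 0) \<in> C_set \<union> D_set" using init unfolding cl .
    then show ?thesis unfolding s0 by (auto simp: C_set_def D_set_def D_tau_iff inbox_def)
  qed
  have jumpG: "e j \<in> D_tau \<and> s (Suc j) \<in> G0 (\<xi> (snd (x (0, 0)) + Suc j)) r (e j)" if j: "j < K" for j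
  proof -
    have "snd (x (tt (Suc j), j)) = snd (x (0, 0)) + j" using lamc[of j] lamj[of j] j by simp
    then have "s (Suc j) \<in> G_hull (\<xi> (snd (x (0, 0)) + Suc j)) r (e j)"
      using jump[OF j] by (simp add: s_def e_def)
    from G_hull_D[OF this] show ?thesis .
  qed
  have sbox: "inbox (s j)" if "j \<le> K" for j
  proof (cases j)
    case 0 then show ?thesis using box0 by simp
  next
    case (Suc k)
    then have "k < K" using that by simp
    then have "e k \<in> D_tau" "s (Suc k) \<in> G0 (\<xi> (snd (x (0, 0)) + Suc k)) r (e k)" using jumpG by auto
    then show ?thesis using Suc G0'_inbox by (auto simp: D_tau_iff G0_iff)
  qed
  have ebox: "inbox (e j)" if j: "j \<le> K" for j
    unfolding inbox_def
  proof
    fix i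
    have "0 \<le> s j $ i" using sbox[OF j] by (simp add: inbox_def)
    then have lo: "0 \<le> e j $ i" using ed[OF j] d0[OF j] by simp
    have hi: "e j $ i \<le> 1"
    proof (cases "tt j = tt (Suc j)")
      case True
      then have "d j = 0" by (simp add: d_def)
      then show ?thesis using ed[OF j] sbox[OF j] by (simp add: inbox_def)
    next
      case False
      then have lt: "tt j < tt (Suc j)" using monoK[OF j] by simp
      define g where "g t = s j $ i + (t - tt j) / Tp" for t
      have "continuous_on (closure {tt j<..<tt (Suc j)}) g" unfolding g_def by (intro continuous_intros) (use Tp in auto)
      moreover have "tt (Suc j) \<in> closure {tt j<..<tt (Suc j)}" using lt by simp
      moreover have "g t \<le> 1" if t: "t \<in> {tt j<..<tt (Suc j)}" for t
      proof -
        have "x (t, j) \<in> C_set" using inC[OF j] t by auto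
        then have "fst (x (t, j)) $ i \<le> 1" by (auto simp: C_set_def)
        moreover have "fst (x (t, j)) = s j + (t - tt j) *\<^sub>R c" unfolding s_def by (rule aff[OF j]) (use t in auto)
        ultimately show ?thesis by (simp add: g_def c_def)
      qed
      ultimately have "g (tt (Suc j)) \<le> 1" by (rule continuous_le_on_closure)
      then show ?thesis using ed[OF j] by (simp add: g_def d_def)
    qed
    show "0 \<le> e j $ i \<and> e j $ i \<le> 1" using lo hi by simp
  qed
  have T: "traj (\<lambda>j. \<xi> (snd (x (0,0)) + Suc j)) r K s e d"
    unfolding traj_def using box0 ed d0 ebox jumpG by blast
  have dle: "tt (Suc j) - tt j \<le> Tp" if j: "j \<le> K" for j
  proof -
    have "0 \<le> s j $ undefined" using sbox[OF j] by (simp add: inbox_def)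
    moreover have "e j $ undefined \<le> 1" using ebox[OF j] by (simp add: inbox_def)
    ultimately have "d j \<le> 1" using ed[OF j] by simp
    then show ?thesis using Tp by (simp add: d_def divide_le_eq)
  qed
  have ttb: "tt (Suc j) \<le> real (Suc j) * Tp" if "j \<le> K" for j
    using that
  proof (induction j)
    case 0 then show ?case using dle[of 0] tt0 by simp
  next
    case (Suc j)
    then have "tt (Suc j) \<le> real (Suc j) * Tp" by simp
    moreover have "tt (Suc (Suc j)) - tt (Suc j) \<le> Tp" using dle Suc.prems by blast
    ultimately show ?case by (simp add: algebra_simps)
  qed
  have "e K = fst (x (T, K))" by (simp add: e_def Tt)
  moreover have "T \<le> real (Suc K) * Tp" using ttb[of K] Tt by simp
  ultimately show ?thesis using T s0 by blast
qed



lemma dist_A_pair: "dist_A z = dist_A (fst z, snd z)" by simp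

lemma ugs_main:
  fixes r :: "real^'n::finite"
  assumes Tp: "0 < Tp"
  shows "UGS Tp \<xi> r"
proof -
  define N where "N = real CARD('n)"
  define \<alpha> where "\<alpha> s = (4 * N + 1) * s" for s :: real
  have N0: "0 < N" by (simp add: N_def)
  have K: "class_K_inf \<alpha>"
    unfolding class_K_inf_def
  proof (intro conjI)
    show "continuous_on {0..} \<alpha>" unfolding \<alpha>_def by (intro continuous_intros)
    show "\<alpha> 0 = 0" by (simp add: \<alpha>_def)
    show "strict_mono_on {0..} \<alpha>" unfolding \<alpha>_def
      by (rule strict_mono_onI) (use N0 in \<open>simp add: mult_strict_left_mono\<close>)
    show "filterlim \<alpha> at_top at_top" unfolding \<alpha>_def
      by (rule filterlim_tendsto_pos_mult_at_top[OF tendsto_const _ filterlim_ident]) (use N0 in simp)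
  qed
  show ?thesis unfolding UGS_def
  proof (intro exI conjI allI impI ballI)
    show "class_K_inf \<alpha>" by (rule K)
    fix hdom and x :: "real \<times> nat \<Rightarrow> (real^'n) \<times> nat" and tk
    assume sol: "is_solution Tp \<xi> r hdom x" and tkd: "tk \<in> hdom"
    obtain t k where tk: "tk = (t, k)" by (cases tk)
    obtain s e d where T: "traj (\<lambda>j. \<xi> (snd (x (0,0)) + Suc j)) r k s e d" and s0: "s 0 = fst (x (0,0))"
      and ek: "e k = fst (x (t, k))"
      using sol_traj[OF sol Tp tkd[unfolded tk]] by blast
    define \<delta> where "\<delta> = dist_A (x (0, 0))"
    have "syncB UNIV (2 * dist_A (fst (x (0,0)), snd (x (0,0)))) (fst (x (0,0)))" by (rule dist_A_lower)
    then have "syncB UNIV (2 * \<delta>) (s 0)" by (simp add: \<delta>_def s0)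
    then have S: "syncB UNIV (2 * \<delta>) (e k)" by (rule traj_bound[OF T])
    have box: "inbox (e k)" using traj_e[OF T order_refl] by blast
    have "dist_A (e k, snd (x (t, k))) \<le> 2 * N * (2 * \<delta>)"
      unfolding N_def by (rule dist_A_upper[OF box S])
    moreover have "0 \<le> \<delta>" by (simp add: \<delta>_def dist_A_def infdist_nonneg)
    ultimately have "dist_A (x (t, k)) \<le> \<alpha> \<delta>" using ek by (simp add: \<alpha>_def algebra_simps)
    then show "case tk of (t, k) \<Rightarrow> dist_A (x (t, k)) \<le> \<alpha> (dist_A (x (0, 0)))"
      by (simp add: tk \<delta>_def)
  qed
qed

lemma time_bound:
  fixes t Tp :: real and k K0 :: nat
  assumes "t \<le> real (Suc k) * Tp" "0 < Tp" "(real K0 + 1) * (Tp + 1) \<le> t + real k"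
  shows "K0 \<le> k"
proof (rule ccontr)
  assume "\<not> K0 \<le> k"
  then have kk: "real k + 1 \<le> real K0" by simp
  have "(real k + 1) * Tp \<le> real K0 * Tp" by (rule mult_right_mono[OF kk]) (use assms(2) in simp)
  then show False using assms kk by (simp add: algebra_simps)
qed

lemma attract:
  fixes r :: "real^'n::finite" and x :: "real \<times> nat \<Rightarrow> (real^'n) \<times> nat"
  assumes sol: "is_solution Tp \<xi> r hdom x" and Tp: "0 < Tp"
    and R: "is_root E i" and rpos: "\<forall>i. 0 < r$i \<and> r$i < 1"
    and occ: "occurs_at \<xi> (sync_string E r i) s'" and le: "snd (x (0,0)) + 1 \<le> s'"
    and tkd: "(t, k) \<in> hdom"
    and big: "(real (s' - snd (x (0,0)) - 1 + length (sync_string E r i)) + 1) * (Tp + 1) \<le> t + real k"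
  shows "dist_A (x (t, k)) = 0"
proof -
  define l0 where "l0 = snd (x (0,0))"
  define m where "m = s' - l0 - 1"
  obtain s e d where T: "traj (\<lambda>j. \<xi> (snd (x (0,0)) + Suc j)) r k s e d"
    and ek: "e k = fst (x (t, k))" and tb: "t \<le> real (Suc k) * Tp"
    using sol_traj[OF sol Tp tkd] by blast
  have mk: "m + length (sync_string E r i) \<le> k"
    by (rule time_bound[OF tb Tp]) (use big in \<open>simp add: m_def l0_def\<close>)
  have occ': "\<forall>k' < length (sync_string E r i). (\<lambda>j. \<xi> (snd (x (0,0)) + Suc j)) (m + k') = sync_string E r i ! k'"
  proof (intro allI impI)
    fix k' assume "k' < length (sync_string E r i)"
    moreover have eq: "snd (x (0,0)) + Suc (m + k') = s' + k'" using le by (simp add: m_def l0_def)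
    moreover have "\<xi> (s' + k') = sync_string E r i ! k'" using occ \<open>k' < length (sync_string E r i)\<close>
      by (simp add: occurs_at_def)
    ultimately have "\<xi> (snd (x (0,0)) + Suc (m + k')) = sync_string E r i ! k'" by (simp only: eq)
    then show "(\<lambda>j. \<xi> (snd (x (0,0)) + Suc j)) (m + k') = sync_string E r i ! k'" by (rule subst[OF refl])
  qed
  have S: "syncB UNIV 0 (e k)" by (rule traj_final[OF T rpos R occ' mk])
  have box: "inbox (e k)" using traj_e[OF T order_refl] by blast
  have "dist_A (e k, snd (x (t, k))) \<le> 2 * real CARD('n) * 0" by (rule dist_A_upper[OF box S])
  then have "dist_A (x (t, k)) \<le> 0" using ek by simp
  moreover have "0 \<le> dist_A (x (t, k))" by (simp add: dist_A_def infdist_nonneg)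
  ultimately show ?thesis by simp
qed

theorem theorem2:
  fixes E :: "('n::finite \<times> 'n) set"
    and Tp :: real
    and r :: "real^'n"
    and \<xi> :: "nat \<Rightarrow> ('n \<times> 'n) set"
  assumes "simple_digraph E"
    and "rooted E"
    and "Tp > 0"
    and "\<forall>i. 0 < r $ i \<and> r $ i < 1"
    and "in_Xi E \<xi>"
  shows "((\<exists>i. is_root E i \<and> contains_inf_often \<xi> (sync_string E r i))
            \<longrightarrow> UGS Tp \<xi> r \<and> GFTA Tp \<xi> r)
       \<and> ((\<exists>i. is_root E i \<and> contains_unif_inf_often \<xi> (sync_string E r i))
            \<longrightarrow> UGS Tp \<xi> r \<and> GFxTA Tp \<xi> r)"
proof (intro conjI impI)
  have Tp: "0 < Tp" using assms(3) .
  have rpos: "\<forall>i. 0 < r $ i \<and> r $ i < 1" using assms(4) .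
  show "UGS Tp \<xi> r" by (rule ugs_main[OF Tp])
  show "UGS Tp \<xi> r" by (rule ugs_main[OF Tp])
  assume "\<exists>i. is_root E i \<and> contains_inf_often \<xi> (sync_string E r i)"
  then obtain i S where R: "is_root E i" and Sinf: "infinite S"
    and Socc: "\<forall>s\<in>S. occurs_at \<xi> (sync_string E r i) s"
    unfolding contains_inf_often_def by blast
  define pick where "pick z = (SOME s'. s' \<in> S \<and> snd z + 1 \<le> s')" for z :: "(real^'n) \<times> nat"
  have pick: "pick z \<in> S \<and> snd z + 1 \<le> pick z" for z
  proof -
    have "\<forall>m. \<exists>n\<ge>m. n \<in> S" using Sinf by (simp add: infinite_nat_iff_unbounded_le)
    then have "\<exists>s'. s' \<in> S \<and> snd z + 1 \<le> s'" by blast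
    then show ?thesis unfolding pick_def by (rule someI_ex)
  qed
  define Tb where "Tb z = (real (pick z - snd z - 1 + length (sync_string E r i)) + 1) * (Tp + 1)" for z
  show "GFTA Tp \<xi> r" unfolding GFTA_def
  proof (intro exI allI impI conjI ballI)
    fix hdom and x :: "real \<times> nat \<Rightarrow> (real^'n) \<times> nat" and tk
    assume sol: "is_solution Tp \<xi> r hdom x"
    show "0 < Tb (x (0, 0))" using Tp by (simp add: Tb_def add_pos_pos)
    assume tkd: "tk \<in> hdom"
    obtain t k where tk: "tk = (t, k)" by (cases tk)
    have "dist_A (x (t, k)) = 0" if "Tb (x (0, 0)) \<le> t + real k"
      using attract[OF sol Tp R rpos _ _ tkd[unfolded tk], of "pick (x (0,0))"] pick[of "x (0,0)"] Socc that
      by (auto simp: Tb_def)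
    then show "case tk of (t, k) \<Rightarrow> Tb (x (0, 0)) \<le> t + real k \<longrightarrow> dist_A (x (t, k)) = 0"
      by (simp add: tk)
  qed
next
  have Tp: "0 < Tp" using assms(3) .
  have rpos: "\<forall>i. 0 < r $ i \<and> r $ i < 1" using assms(4) .
  assume "\<exists>i. is_root E i \<and> contains_unif_inf_often \<xi> (sync_string E r i)"
  then obtain i n where R: "is_root E i" and n0: "0 < n"
    and W: "\<forall>s\<ge>1. \<exists>s'. s \<le> s' \<and> s' + length (sync_string E r i) \<le> s + n \<and> occurs_at \<xi> (sync_string E r i) s'"
    unfolding contains_unif_inf_often_def by blast
  show "GFxTA Tp \<xi> r" unfolding GFxTA_def
  proof (intro exI conjI allI impI ballI)
    show "0 < (real n + 1) * (Tp + 1)" using Tp by (simp add: add_pos_pos)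
    fix hdom and x :: "real \<times> nat \<Rightarrow> (real^'n) \<times> nat" and tk
    assume sol: "is_solution Tp \<xi> r hdom x" and tkd: "tk \<in> hdom"
    obtain t k where tk: "tk = (t, k)" by (cases tk)
    obtain s' where s': "snd (x (0,0)) + 1 \<le> s'" "s' + length (sync_string E r i) \<le> snd (x (0,0)) + 1 + n"
      "occurs_at \<xi> (sync_string E r i) s'"
      using W[rule_format, of "snd (x (0,0)) + 1"] by auto
    have "dist_A (x (t, k)) = 0" if big: "(real n + 1) * (Tp + 1) \<le> t + real k"
    proof -
    have "s' - snd (x (0,0)) - 1 + length (sync_string E r i) \<le> n" using s' by simp
    then have "real (s' - snd (x (0,0)) - 1 + length (sync_string E r i)) + 1 \<le> real n + 1" by simp
    then have "(real (s' - snd (x (0,0)) - 1 + length (sync_string E r i)) + 1) * (Tp + 1) \<le> (real n + 1) * (Tp + 1)"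
      using Tp by (intro mult_right_mono) auto
    then have "(real (s' - snd (x (0,0)) - 1 + length (sync_string E r i)) + 1) * (Tp + 1) \<le> t + real k"
      using big by simp
    from attract[OF sol Tp R rpos s'(3) s'(1) tkd[unfolded tk] this]
    show ?thesis .
    qed
    then show "case tk of (t, k) \<Rightarrow> (real n + 1) * (Tp + 1) \<le> t + real k \<longrightarrow> dist_A (x (t, k)) = 0"
      by (simp add: tk)
  qed
qed

end
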